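(* Let $n\geq 2$ and let $R$ be the unital associative ring $\langle x,y \mid x^n=0,\ y^n=0,\ xy+y^{n-1}x^{n-1}=1\rangle$. Then $R$ is generated as an additive group by the elements $y^ix^j$ for $0\leq i,j<n$.
   Context: $R$ denotes the quotient of the free unital associative ring $\mathbb{Z}\langle x,y\rangle$ by the two-sided ideal generated by $x^n$, $y^n$ and $xy+y^{n-1}x^{n-1}-1$; $x^0=y^0=1$. *)

theory Defs
  imports Main
begin

text \<open>It is the image of the free ring Z<x,y>
  under the evaluation homomorphism X |-> x, Y |-> y.\<close>

inductive_set ring_gen :: "'a::ring_1 \<Rightarrow> 'a \<Rightarrow> 'a set" for x y :: "'a::ring_1" where
  zero: "0 \<in> ring_gen x y"
| one:  "1 \<in> ring_gen x y"
| genx: "x \<in> ring_gen x y"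
| geny: "y \<in> ring_gen x y"
| add:  "a \<in> ring_gen x y \<Longrightarrow> b \<in> ring_gen x y \<Longrightarrow> a + b \<in> ring_gen x y"
| neg:  "a \<in> ring_gen x y \<Longrightarrow> - a \<in> ring_gen x y"
| mult: "a \<in> ring_gen x y \<Longrightarrow> b \<in> ring_gen x y \<Longrightarrow> a * b \<in> ring_gen x y"

end

theory Submission
  imports Defs
begin

inductive_set SS :: "nat \<Rightarrow> 'a::ring_1 \<Rightarrow> 'a \<Rightarrow> 'a set" for n :: nat and x y :: 'a where
  bas: "y ^ i * x ^ j \<in> SS n x y"
| zer: "0 \<in> SS n x y"
| ad: "a \<in> SS n x y \<Longrightarrow> b \<in> SS n x y \<Longrightarrow> a + b \<in> SS n x y"
| ng: "a \<in> SS n x y \<Longrightarrow> - a \<in> SS n x y"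

lemma pow_zero_ge: "(z::'a::ring_1) ^ n = 0 \<Longrightarrow> n \<le> k \<Longrightarrow> z ^ k = 0"
  by (metis le_add_diff_inverse mult_zero_left power_add)

context
  fixes n :: nat and x y :: "'a::ring_1"
  assumes n2: "n \<ge> 2" and xn: "x ^ n = 0" and yn: "y ^ n = 0"
    and rel: "x * y + y ^ (n - 1) * x ^ (n - 1) = 1"
begin

lemma xy: "x * y = 1 - y ^ (n - 1) * x ^ (n - 1)"
  using rel by (metis add_diff_cancel_right')

lemma lemA: "m \<le> n - 1 \<Longrightarrow> y ^ (n - 1) * x ^ m * y ^ m = y ^ (n - 1)"
proof (induction m)
  case 0 then show ?case by simp
next
  case (Suc m)
  have IH: "y ^ (n - 1) * x ^ m * y ^ m = y ^ (n - 1)" using Suc by simp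
  have z: "y ^ (n - 1) * x ^ m * y ^ (n - 1) = 0"
  proof -
    have "y ^ (n - 1) * x ^ m * y ^ (n - 1) = y ^ (n - 1) * x ^ m * y ^ m * y ^ (n - 1 - m)"
      using Suc.prems by (simp add: mult.assoc flip: power_add)
    also have "\<dots> = y ^ (n - 1 + (n - 1 - m))" using IH by (simp add: power_add)
    also have "\<dots> = 0" using Suc.prems by (intro pow_zero_ge[OF yn]) simp
    finally show ?thesis .
  qed
  have "y ^ (n - 1) * x ^ Suc m * y ^ Suc m = y ^ (n - 1) * x ^ m * (x * y) * y ^ m"
    by (simp only: power_Suc2[of x m] power_Suc[of y m] mult.assoc)
  also have "\<dots> = y ^ (n - 1) * x ^ m * y ^ m - y ^ (n - 1) * x ^ m * y ^ (n - 1) * x ^ (n - 1) * y ^ m"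
    by (simp only: xy right_diff_distrib left_diff_distrib mult_1_right mult.assoc diff_diff_eq2 diff_add_eq)
  also have "\<dots> = y ^ (n - 1)" using IH z by simp
  finally show ?case .
qed

lemma lemB: "m \<le> n - 2 \<Longrightarrow> y ^ (n - 1) * x ^ m * y ^ (n - 1) = 0"
proof -
  assume m: "m \<le> n - 2"
  have "y ^ (n - 1) * x ^ m * y ^ (n - 1) = y ^ (n - 1) * x ^ m * y ^ m * y ^ (n - 1 - m)"
    using m n2 by (simp add: mult.assoc flip: power_add)
  also have "\<dots> = y ^ (n - 1 + (n - 1 - m))"
  proof -
    have "y ^ (n - 1) * x ^ m * y ^ m = y ^ (n - 1)" using m n2 by (intro lemA) simp
    then show ?thesis by (simp only: power_add)
  qed
  also have "\<dots> = 0" using m n2 by (intro pow_zero_ge[OF yn]) simp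
  finally show ?thesis .
qed

lemma lemC: "1 \<le> i \<Longrightarrow> i \<le> n \<Longrightarrow> x * y ^ i = y ^ (i - 1) - y ^ (n - 1) * x ^ (n - i)"
proof (induction i rule: nat_induct_at_least)
  case base then show ?case using xy by simp
next
  case (Suc i)
  have IH: "x * y ^ i = y ^ (i - 1) - y ^ (n - 1) * x ^ (n - i)" using Suc by simp
  have ni: "n - i = Suc (n - Suc i)" using Suc.prems by simp
  have e: "x ^ (n - i) = x ^ (n - Suc i) * x" unfolding ni by (rule power_Suc2)
  have yy: "y ^ (i - 1) * y = y ^ i" using power_Suc2[of y "i - 1", symmetric] Suc.hyps by simp
  have "x * y ^ Suc i = (x * y ^ i) * y" by (metis mult.assoc power_Suc2)
  also have "\<dots> = y ^ (i - 1) * y - y ^ (n - 1) * x ^ (n - Suc i) * (x * y)"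
    by (simp only: IH e left_diff_distrib mult.assoc)
  also have "\<dots> = y ^ i - y ^ (n - 1) * x ^ (n - Suc i) * (x * y)"
    by (simp only: yy)
  also have "\<dots> = y ^ i - y ^ (n - 1) * x ^ (n - Suc i)
        + y ^ (n - 1) * x ^ (n - Suc i) * y ^ (n - 1) * x ^ (n - 1)"
    by (simp only: xy right_diff_distrib left_diff_distrib mult_1_right mult.assoc diff_diff_eq2 diff_add_eq)
  also have "\<dots> = y ^ i - y ^ (n - 1) * x ^ (n - Suc i)"
    using lemB[of "n - Suc i"] Suc.prems Suc.hyps by simp
  finally show ?case by simp
qed

lemma x_bas: "x * (y ^ i * x ^ j) \<in> SS n x y"
proof (cases "i = 0")
  case True then show ?thesis using SS.bas[where i=0 and j="Suc j" and n=n and x=x and y=y] by simp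
next
  case False
  show ?thesis
  proof (cases "i \<le> n")
    case True
    have "x * (y ^ i * x ^ j) = (x * y ^ i) * x ^ j" by (simp add: mult.assoc)
    also have "\<dots> = (y ^ (i - 1) - y ^ (n - 1) * x ^ (n - i)) * x ^ j"
      using lemC[of i] True False by simp
    also have "\<dots> = y ^ (i - 1) * x ^ j + - (y ^ (n - 1) * x ^ (n - i + j))"
      by (simp add: left_diff_distrib mult.assoc power_add)
    finally have "x * (y ^ i * x ^ j) = y ^ (i - 1) * x ^ j + - (y ^ (n - 1) * x ^ (n - i + j))" .
    then show ?thesis by (metis SS.ad SS.bas SS.ng)
  next
    case False
    then have "y ^ i = 0" using pow_zero_ge[OF yn] by simp
    then show ?thesis by (simp add: SS.zer)
  qed
qed

lemma x_SS: "b \<in> SS n x y \<Longrightarrow> x * b \<in> SS n x y"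
  by (induction rule: SS.induct) (auto simp: x_bas distrib_left intro: SS.intros)

lemma y_SS: "b \<in> SS n x y \<Longrightarrow> y * b \<in> SS n x y"
proof (induction rule: SS.induct)
  case (bas i j) then show ?case using SS.bas[where i="Suc i" and j=j and n=n and x=x and y=y] by (simp add: mult.assoc)
qed (auto simp: distrib_left intro: SS.intros)

lemma xk_SS: "b \<in> SS n x y \<Longrightarrow> x ^ k * b \<in> SS n x y"
  by (induction k) (auto simp: mult.assoc x_SS)

lemma yk_SS: "b \<in> SS n x y \<Longrightarrow> y ^ k * b \<in> SS n x y"
  by (induction k) (auto simp: mult.assoc y_SS)

lemma mult_SS: "a \<in> SS n x y \<Longrightarrow> b \<in> SS n x y \<Longrightarrow> a * b \<in> SS n x y"
proof (induction rule: SS.induct)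
  case (bas i j) then show ?case by (simp add: mult.assoc xk_SS yk_SS)
qed (auto simp: distrib_right intro: SS.intros)

lemma gen_SS: "z \<in> ring_gen x y \<Longrightarrow> z \<in> SS n x y"
proof (induction rule: ring_gen.induct)
  case zero then show ?case by (rule SS.zer)
next
  case one then show ?case using SS.bas[where i=0 and j=0 and n=n and x=x and y=y] by simp
next
  case genx then show ?case using SS.bas[where i=0 and j=1 and n=n and x=x and y=y] by simp
next
  case geny then show ?case using SS.bas[where i=1 and j=0 and n=n and x=x and y=y] by simp
qed (auto intro: SS.intros mult_SS)

definition spn :: "'a \<Rightarrow> bool" where
  "spn z \<longleftrightarrow> (\<exists>c :: nat \<Rightarrow> nat \<Rightarrow> int. z = (\<Sum>i<n. \<Sum>j<n. of_int (c i j) * (y ^ i * x ^ j)))"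

lemma SS_spn: "z \<in> SS n x y \<Longrightarrow> spn z"
proof (induction rule: SS.induct)
  case (bas i j)
  show ?case
  proof (cases "i < n \<and> j < n")
    case True
    let ?c = "\<lambda>a b. if a = i \<and> b = j then 1 else (0::int)"
    have "(\<Sum>a<n. \<Sum>b<n. of_int (?c a b) * (y ^ a * x ^ b)) = y ^ i * x ^ j"
    proof -
      have "\<And>a b. of_int (?c a b) * (y ^ a * x ^ b)
          = (if b = j then (if a = i then y ^ a * x ^ b else 0) else 0)" by simp
      then show ?thesis using True by (simp add: sum.delta)
    qed
    then show ?thesis unfolding spn_def by (intro exI[of _ ?c]) (rule sym)
  next
    case False
    then have "y ^ i * x ^ j = 0" using pow_zero_ge[OF yn, of i] pow_zero_ge[OF xn, of j]
      by (cases "i < n") auto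
    then show ?thesis unfolding spn_def by (intro exI[of _ "\<lambda>_ _. 0"]) simp
  qed
next
  case zer then show ?case unfolding spn_def by (intro exI[of _ "\<lambda>_ _. 0"]) simp
next
  case (ad a b)
  then obtain c d where e: "a = (\<Sum>i<n. \<Sum>j<n. of_int (c i j) * (y ^ i * x ^ j))"
    "b = (\<Sum>i<n. \<Sum>j<n. of_int (d i j) * (y ^ i * x ^ j))" unfolding spn_def by blast
  show ?case unfolding spn_def
    by (rule exI[of _ "\<lambda>i j. c i j + d i j"]) (simp only: e of_int_add distrib_right sum.distrib)
next
  case (ng a)
  then obtain c where e: "a = (\<Sum>i<n. \<Sum>j<n. of_int (c i j) * (y ^ i * x ^ j))"
    unfolding spn_def by blast
  show ?case unfolding spn_def
    by (rule exI[of _ "\<lambda>i j. - c i j"]) (simp only: e of_int_minus mult_minus_left sum_negf)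
qed

end

theorem lemma2:
  fixes n :: nat and x y :: "'a::ring_1"
  assumes "n \<ge> 2"
    and "x ^ n = 0" and "y ^ n = 0"
    and "x * y + y ^ (n - 1) * x ^ (n - 1) = 1"
  shows "\<forall>z \<in> ring_gen x y. \<exists>c :: nat \<Rightarrow> nat \<Rightarrow> int.
           z = (\<Sum>i<n. \<Sum>j<n. of_int (c i j) * (y ^ i * x ^ j))"
proof
  fix z assume "z \<in> ring_gen x y"
  then have "z \<in> SS n x y" by (rule gen_SS[OF assms])
  then have "spn n x y z" by (rule SS_spn[OF assms])
  then show "\<exists>c :: nat \<Rightarrow> nat \<Rightarrow> int.
           z = (\<Sum>i<n. \<Sum>j<n. of_int (c i j) * (y ^ i * x ^ j))"
    by (simp only: spn_def[OF assms])
qed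

end
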